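(* Let $n\ge 2$, let $m$ be a positive integer and $m_1\le m_2$ positive integers with $n=\tfrac12(m_1+m_2)m+2$, and let $\phi$ be a homogeneous polynomial on $\mathbb{R}^n$ of degree $m$ satisfying $$|\nabla\phi(x)|^2=m^2|x|^{2m-2},\qquad \Delta\phi(x)=\tfrac12(m_2-m_1)m^2|x|^{m-2}\qquad (x\in\mathbb{R}^n).$$ Put $s=|x|^m$, $t=\phi(x)$, $\mu=\tfrac12(m_1+m_2)$, $\nu=\tfrac12(m_2-m_1)$, and for a $C^2$-function $f=f(s,t)$ set $$h=f_ss+f_tt,\qquad A=(f_s^2+f_t^2)s+2f_sf_tt,\qquad B=(f_sA_s+f_tA_t)s+(f_sA_t+f_tA_s)t,$$ $$C=(f_{ss}+f_{tt})s+2f_{st}t+(\mu+1)f_s+\nu f_t .$$ Then, for every real $p$ and every $C^2$-function $f$, $$\Delta_p\, f(|x|^m,\phi(x))=m^4 s^{1-4/m}\Big(sAC+\tfrac{p-2}{2}sB+\tfrac{(m-2)(p-2)}{2m}Ah\Big),$$ where the right-hand side is evaluated at $(s,t)=(|x|^m,\phi(x))$. In particular $u(x)=f(|x|^m,\phi(x))$ is $p$-harmonic if and only if $$sAC+\tfrac{p-2}{2}sB+\tfrac{(m-2)(p-2)}{2m}Ah=0 .$$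
   Context: For real $p$ the $p$-Laplacian of a $C^2$ function $u$ on a domain of $\mathbb{R}^n$ is $\Delta_p u:=|\nabla u|^2\Delta u+\tfrac{p-2}{2}\nabla u\cdot\nabla|\nabla u|^2$, and $u$ is called $p$-harmonic if $\Delta_p u=0$. Subscripts on $f$ and $A$ denote partial derivatives with respect to $s$ and $t$. *)

theory Defs
  imports "HOL-Analysis.Analysis"
begin

definition homogeneous_polynomial :: "nat \<Rightarrow> (real^'n \<Rightarrow> real) \<Rightarrow> bool" where
  "homogeneous_polynomial m \<phi> \<longleftrightarrow>
     (\<exists>(S :: ('n \<Rightarrow> nat) set) c. finite S \<and> (\<forall>\<alpha>\<in>S. (\<Sum>i\<in>UNIV. \<alpha> i) = m) \<and>
        (\<forall>x. \<phi> x = (\<Sum>\<alpha>\<in>S. c \<alpha> * (\<Prod>i\<in>UNIV. (x $ i) ^ \<alpha> i))))"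

definition partial :: "'n \<Rightarrow> (real^'n \<Rightarrow> real) \<Rightarrow> real^'n \<Rightarrow> real" where
  "partial i g x = deriv (\<lambda>h. g (x + h *\<^sub>R axis i 1)) 0"

definition grad :: "(real^'n \<Rightarrow> real) \<Rightarrow> real^'n \<Rightarrow> real^'n" where
  "grad g x = (\<chi> i. partial i g x)"

definition laplacian :: "(real^'n \<Rightarrow> real) \<Rightarrow> real^'n \<Rightarrow> real" where
  "laplacian g x = (\<Sum>i\<in>UNIV. partial i (partial i g) x)"

definition p_laplacian :: "real \<Rightarrow> (real^'n \<Rightarrow> real) \<Rightarrow> real^'n \<Rightarrow> real" where
  "p_laplacian p g x =
     (norm (grad g x))\<^sup>2 * laplacian g x
     + (p - 2) / 2 * (grad g x \<bullet> grad (\<lambda>y. (norm (grad g y))\<^sup>2) x)"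

definition ds :: "(real \<times> real \<Rightarrow> real) \<Rightarrow> real \<times> real \<Rightarrow> real" where
  "ds f = (\<lambda>(s,t). deriv (\<lambda>\<sigma>. f (\<sigma>, t)) s)"

definition dt :: "(real \<times> real \<Rightarrow> real) \<Rightarrow> real \<times> real \<Rightarrow> real" where
  "dt f = (\<lambda>(s,t). deriv (\<lambda>\<tau>. f (s, \<tau>)) t)"

definition C2_on :: "(real \<times> real) set \<Rightarrow> (real \<times> real \<Rightarrow> real) \<Rightarrow> bool" where
  "C2_on U f \<longleftrightarrow> open U \<and>
     (\<forall>g\<in>{f, ds f, dt f}. \<forall>(s,t)\<in>U.
        (\<lambda>\<sigma>. g (\<sigma>, t)) differentiable (at s) \<and> (\<lambda>\<tau>. g (s, \<tau>)) differentiable (at t)) \<and>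
     (\<forall>g\<in>{f, ds f, dt f, ds (ds f), ds (dt f), dt (ds f), dt (dt f)}. continuous_on U g)"

definition hfun :: "(real \<times> real \<Rightarrow> real) \<Rightarrow> real \<times> real \<Rightarrow> real" where
  "hfun f = (\<lambda>(s,t). ds f (s,t) * s + dt f (s,t) * t)"

definition Afun :: "(real \<times> real \<Rightarrow> real) \<Rightarrow> real \<times> real \<Rightarrow> real" where
  "Afun f = (\<lambda>(s,t). ((ds f (s,t))\<^sup>2 + (dt f (s,t))\<^sup>2) * s + 2 * ds f (s,t) * dt f (s,t) * t)"

definition Bfn :: "(real \<times> real \<Rightarrow> real) \<Rightarrow> real \<times> real \<Rightarrow> real" where
  "Bfn f = (\<lambda>(s,t).
     (ds f (s,t) * ds (Afun f) (s,t) + dt f (s,t) * dt (Afun f) (s,t)) * s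
     + (ds f (s,t) * dt (Afun f) (s,t) + dt f (s,t) * ds (Afun f) (s,t)) * t)"

definition Cfun :: "real \<Rightarrow> real \<Rightarrow> (real \<times> real \<Rightarrow> real) \<Rightarrow> real \<times> real \<Rightarrow> real" where
  "Cfun \<mu> \<nu> f = (\<lambda>(s,t).
     (ds (ds f) (s,t) + dt (dt f) (s,t)) * s + 2 * ds (dt f) (s,t) * t
     + (\<mu> + 1) * ds f (s,t) + \<nu> * dt f (s,t))"

end

theory Submission
  imports Defs
begin
lemma partial_hd:
  fixes g :: "real^'n \<Rightarrow> real"
  assumes "(g has_derivative G) (at y)"
  shows "partial i g y = G (axis i 1)"
proof -
  have lin: "linear G" using assms has_derivative_linear by blast
  have "((\<lambda>h. y + h *\<^sub>R axis i (1::real)) has_derivative (\<lambda>h. h *\<^sub>R axis i 1)) (at (0::real))"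
    by (auto intro!: derivative_eq_intros)
  moreover have "(g has_derivative G) (at (y + 0 *\<^sub>R axis i (1::real)))"
    using assms by simp
  ultimately have "((\<lambda>h. g (y + h *\<^sub>R axis i 1)) has_derivative (\<lambda>h. G (h *\<^sub>R axis i 1))) (at 0)"
    by (rule has_derivative_compose)
  moreover have "(\<lambda>h. G (h *\<^sub>R axis i 1)) = (*) (G (axis i 1))"
    using lin by (auto simp: linear_scale)
  ultimately have "((\<lambda>h. g (y + h *\<^sub>R axis i 1)) has_field_derivative G (axis i 1)) (at 0)"
    by (simp add: has_field_derivative_def)
  then show ?thesis unfolding partial_def by (rule DERIV_imp_deriv)
qed

lemma partial_cong:
  fixes g h :: "real^'n \<Rightarrow> real"
  assumes "open N" "y \<in> N" "\<And>z. z \<in> N \<Longrightarrow> g z = h z"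
  shows "partial i g y = partial i h y"
proof -
  obtain e where e: "e > 0" "ball y e \<subseteq> N" using assms(1,2) open_contains_ball by blast
  have "eventually (\<lambda>k. y + k *\<^sub>R axis i (1::real) \<in> N) (nhds 0)"
    unfolding eventually_nhds_metric
  proof (intro exI[of _ e] conjI allI impI)
    show "e > 0" by (rule e(1))
    fix k :: real assume "dist k 0 < e"
    then have "dist y (y + k *\<^sub>R axis i 1) < e" by (simp add: dist_norm)
    then show "y + k *\<^sub>R axis i (1::real) \<in> N" using e(2) by auto
  qed
  then have "eventually (\<lambda>k. g (y + k *\<^sub>R axis i 1) = h (y + k *\<^sub>R axis i 1)) (nhds 0)"
    by (rule eventually_mono) (use assms(3) in auto)
  then show ?thesis unfolding partial_def by (rule deriv_cong_ev) simp
qed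

lemma ds_hd:
  fixes g :: "real \<times> real \<Rightarrow> real"
  assumes "(g has_derivative G) (at (s,t))"
  shows "ds g (s,t) = G (1,0)"
proof -
  have lin: "linear G" using assms has_derivative_linear by blast
  have "((\<lambda>h. (h, t)) has_derivative (\<lambda>h. (h, 0))) (at s)"
    by (auto intro!: derivative_eq_intros)
  moreover have "(g has_derivative G) (at (s, t))" using assms by simp
  ultimately have "((\<lambda>h. g (h, t)) has_derivative (\<lambda>h. G (h, 0))) (at s)"
    by (rule has_derivative_compose)
  moreover have "(\<lambda>h. G (h, 0)) = (*) (G (1, 0))"
  proof
    fix h :: real
    have "G (h, 0) = G (h *\<^sub>R (1, 0))" by simp
    also have "\<dots> = h * G (1,0)" using linear_scale[OF lin, of h "(1,0)"] by simp
    finally show "G (h, 0) = G (1, 0) * h" by simp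
  qed
  ultimately have "((\<lambda>h. g (h, t)) has_field_derivative G (1, 0)) (at s)"
    by (simp add: has_field_derivative_def)
  then show ?thesis unfolding ds_def by (simp add: DERIV_imp_deriv)
qed

lemma dt_hd:
  fixes g :: "real \<times> real \<Rightarrow> real"
  assumes "(g has_derivative G) (at (s,t))"
  shows "dt g (s,t) = G (0,1)"
proof -
  have lin: "linear G" using assms has_derivative_linear by blast
  have "((\<lambda>h. (s, h)) has_derivative (\<lambda>h. (0, h))) (at t)"
    by (auto intro!: derivative_eq_intros)
  moreover have "(g has_derivative G) (at (s, t))" using assms by simp
  ultimately have "((\<lambda>h. g (s, h)) has_derivative (\<lambda>h. G (0, h))) (at t)"
    by (rule has_derivative_compose)
  moreover have "(\<lambda>h. G (0, h)) = (*) (G (0, 1))"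
  proof
    fix h :: real
    have "G (0, h) = G (h *\<^sub>R (0, 1))" by simp
    also have "\<dots> = h * G (0,1)" using linear_scale[OF lin, of h "(0,1)"] by simp
    finally show "G (0, h) = G (0, 1) * h" by simp
  qed
  ultimately have "((\<lambda>h. g (s, h)) has_field_derivative G (0, 1)) (at t)"
    by (simp add: has_field_derivative_def)
  then show ?thesis unfolding dt_def by (simp add: DERIV_imp_deriv)
qed

lemma D2:
  fixes g :: "real \<times> real \<Rightarrow> real"
  assumes "g differentiable (at z)"
  shows "(g has_derivative (\<lambda>v. fst v * ds g z + snd v * dt g z)) (at z)"
proof -
  obtain G where G: "(g has_derivative G) (at z)" using assms differentiable_def by blast
  have lin: "linear G" using G has_derivative_linear by blast
  obtain s t where z: "z = (s,t)" by fastforce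
  have Geq: "G = (\<lambda>v. fst v * G (1,0) + snd v * G (0,1))"
  proof (rule ext)
    fix v :: "real \<times> real"
    have "v = fst v *\<^sub>R (1,0) + snd v *\<^sub>R (0,1)" by (cases v) simp
    then have "G v = G (fst v *\<^sub>R (1,0) + snd v *\<^sub>R (0,1))" by (rule arg_cong)
    also have "\<dots> = G (fst v *\<^sub>R (1,0)) + G (snd v *\<^sub>R (0,1))"
      by (rule linear_add[OF lin])
    also have "\<dots> = fst v *\<^sub>R G (1,0) + snd v *\<^sub>R G (0,1)"
      by (simp only: linear_scale[OF lin])
    also have "\<dots> = fst v * G (1,0) + snd v * G (0,1)" by simp
    finally show "G v = fst v * G (1,0) + snd v * G (0,1)" .
  qed
  have "(g has_derivative (\<lambda>v. fst v * G (1,0) + snd v * G (0,1))) (at z)"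
    by (rule has_derivative_eq_rhs[OF G Geq])
  then show ?thesis unfolding z ds_hd[OF G[unfolded z]] dt_hd[OF G[unfolded z]] .
qed

lemma Dn:
  fixes g :: "real^'n \<Rightarrow> real"
  assumes "g differentiable (at y)"
  shows "(g has_derivative (\<lambda>v. \<Sum>i\<in>UNIV. v$i * partial i g y)) (at y)"
proof -
  obtain G where G: "(g has_derivative G) (at y)" using assms differentiable_def by blast
  have lin: "linear G" using G has_derivative_linear by blast
  have Geq: "G = (\<lambda>v. \<Sum>i\<in>UNIV. v$i * G (axis i 1))"
  proof (rule ext)
    fix v :: "real^'n"
    have e: "(\<Sum>i\<in>UNIV. (v$i) *\<^sub>R axis i 1) = v"
      using basis_expansion[of v] by (simp add: scalar_mult_eq_scaleR)
    have "G v = G (\<Sum>i\<in>UNIV. (v$i) *\<^sub>R axis i 1)" by (simp only: e)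
    also have "\<dots> = (\<Sum>i\<in>UNIV. G ((v$i) *\<^sub>R axis i 1))"
      by (rule linear_sum[OF lin])
    also have "\<dots> = (\<Sum>i\<in>UNIV. (v$i) *\<^sub>R G (axis i 1))"
      by (simp only: linear_scale[OF lin])
    also have "\<dots> = (\<Sum>i\<in>UNIV. v$i * G (axis i 1))" by simp
    finally show "G v = (\<Sum>i\<in>UNIV. v$i * G (axis i 1))" .
  qed
  have "(g has_derivative (\<lambda>v. \<Sum>i\<in>UNIV. v$i * G (axis i 1))) (at y)"
    by (rule has_derivative_eq_rhs[OF G Geq])
  then show ?thesis unfolding partial_hd[OF G] .
qed

lemma chain2:
  fixes g :: "real \<times> real \<Rightarrow> real" and S P :: "real^'n \<Rightarrow> real"
  assumes g: "g differentiable (at (S y, P y))" and S: "S differentiable (at y)"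
    and P: "P differentiable (at y)"
  shows "(\<lambda>y. g (S y, P y)) differentiable (at y)"
    and "partial i (\<lambda>y. g (S y, P y)) y
           = ds g (S y, P y) * partial i S y + dt g (S y, P y) * partial i P y"
proof -
  have hS: "(S has_derivative (\<lambda>v. \<Sum>i\<in>UNIV. v$i * partial i S y)) (at y)" by (rule Dn[OF S])
  have hP: "(P has_derivative (\<lambda>v. \<Sum>i\<in>UNIV. v$i * partial i P y)) (at y)" by (rule Dn[OF P])
  have hZ: "((\<lambda>y. (S y, P y)) has_derivative
      (\<lambda>v. ((\<Sum>i\<in>UNIV. v$i * partial i S y), (\<Sum>i\<in>UNIV. v$i * partial i P y)))) (at y)"
    by (rule has_derivative_Pair[OF hS hP])
  have hg: "(g has_derivative (\<lambda>v. fst v * ds g (S y, P y) + snd v * dt g (S y, P y))) (at (S y, P y))"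
    by (rule D2[OF g])
  have hc: "((\<lambda>y. g (S y, P y)) has_derivative
     (\<lambda>v. (\<Sum>i\<in>UNIV. v$i * partial i S y) * ds g (S y, P y) + (\<Sum>i\<in>UNIV. v$i * partial i P y) * dt g (S y, P y))) (at y)"
    using has_derivative_compose[OF hZ hg] by (simp add: o_def)
  then show "(\<lambda>y. g (S y, P y)) differentiable (at y)" unfolding differentiable_def by blast
  have ax: "(\<Sum>j\<in>UNIV. axis i (1::real) $ j * F j) = F i" for F :: "'n \<Rightarrow> real"
  proof -
    have "\<And>j. axis i (1::real) $ j * F j = (if j = i then F j else 0)" by (simp add: axis_def)
    then show ?thesis by simp
  qed
  show "partial i (\<lambda>y. g (S y, P y)) y
           = ds g (S y, P y) * partial i S y + dt g (S y, P y) * partial i P y"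
    unfolding partial_hd[OF hc, of i] ax[of "\<lambda>j. partial j S y"] ax[of "\<lambda>j. partial j P y"]
    by (simp only: mult.commute)
qed

lemma ds_DERIV:
  assumes "(\<lambda>\<sigma>. g (\<sigma>, t)) differentiable (at s)"
  shows "((\<lambda>\<sigma>. g (\<sigma>, t)) has_real_derivative ds g (s,t)) (at s)"
  using assms by (simp add: ds_def DERIV_deriv_iff_real_differentiable)

lemma dt_DERIV:
  assumes "(\<lambda>\<tau>. g (s, \<tau>)) differentiable (at t)"
  shows "((\<lambda>\<tau>. g (s, \<tau>)) has_real_derivative dt g (s,t)) (at t)"
  using assms by (simp add: dt_def DERIV_deriv_iff_real_differentiable)

lemma C1_diff:
  fixes g :: "real \<times> real \<Rightarrow> real"
  assumes U: "open U" "z \<in> U"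
    and dx: "\<And>s t. (s,t) \<in> U \<Longrightarrow> (\<lambda>\<sigma>. g (\<sigma>,t)) differentiable (at s)"
    and dy: "\<And>s t. (s,t) \<in> U \<Longrightarrow> (\<lambda>\<tau>. g (s,\<tau>)) differentiable (at t)"
    and cy: "continuous_on U (dt g)"
  shows "g differentiable (at z)"
proof -
  obtain s t where z: "z = (s,t)" by fastforce
  obtain e where e: "e > 0" "ball z e \<subseteq> U" using U open_contains_ball by blast
  define X where "X = ball s (e/2)"
  define Y where "Y = ball t (e/2)"
  have XY: "X \<times> Y \<subseteq> U"
  proof
    fix w assume "w \<in> X \<times> Y"
    then obtain a b where w: "w = (a,b)" "dist s a < e/2" "dist t b < e/2"
      by (auto simp: X_def Y_def)
    have "dist z w = sqrt ((dist s a)\<^sup>2 + (dist t b)\<^sup>2)"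
      by (simp add: z w dist_Pair_Pair)
    also have "\<dots> \<le> sqrt ((dist s a + dist t b)\<^sup>2)"
      by (rule real_sqrt_le_mono) (simp add: power2_sum)
    also have "\<dots> = dist s a + dist t b" by simp
    also have "\<dots> < e" using w by simp
    finally show "w \<in> U" using e by auto
  qed
  have sX: "s \<in> X" and tY: "t \<in> Y" using e by (auto simp: X_def Y_def)
  obtain D where D: "((\<lambda>\<sigma>. g (\<sigma>,t)) has_derivative D) (at s)"
    using dx[of s t] U z unfolding differentiable_def by auto
  have fx: "((\<lambda>x. g (x,t)) has_derivative D) (at s within X)"
    using D by (rule has_derivative_at_withinI)
  have fy: "((\<lambda>y. g (x, y)) has_derivative blinfun_apply (blinfun_mult_right (dt g (x,y)))) (at y within Y)"
    if "x \<in> X" "y \<in> Y" for x y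
  proof -
    have "(x,y) \<in> U" using XY that by auto
    then have "((\<lambda>\<tau>. g (x, \<tau>)) has_real_derivative dt g (x,y)) (at y)" by (intro dt_DERIV dy)
    then show ?thesis by (simp add: has_field_derivative_def has_derivative_at_withinI)
  qed
  have "isCont (dt g) (s,t)" using cy U z continuous_on_eq_continuous_at by blast
  then have "isCont (\<lambda>w. blinfun_mult_right (dt g w)) (s,t)"
    by (rule bounded_linear.continuous[OF bounded_linear_blinfun_mult_right])
  then have fyc: "continuous (at (s,t) within X \<times> Y) (\<lambda>(x,y). blinfun_mult_right (dt g (x,y)))"
    by (simp add: continuous_at_imp_continuous_within case_prod_beta')
  have "((\<lambda>(x,y). g (x,y)) has_derivative (\<lambda>(tx, ty). D tx + blinfun_mult_right (dt g (s,t)) ty)) (at (s, t) within X \<times> Y)"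
    by (rule has_derivative_partialsI[OF fx fy fyc tY]) (auto simp: Y_def)
  moreover have "at (s,t) within X \<times> Y = at (s,t)"
    by (rule at_within_open) (use e in \<open>auto simp: sX tY X_def Y_def open_Times\<close>)
  ultimately show ?thesis unfolding z differentiable_def by auto
qed

lemma schwarz:
  fixes g :: "real \<times> real \<Rightarrow> real"
  assumes U: "open U" "z \<in> U"
    and gx: "\<And>s t. (s,t) \<in> U \<Longrightarrow> (\<lambda>\<sigma>. g (\<sigma>,t)) differentiable (at s)"
    and gy: "\<And>s t. (s,t) \<in> U \<Longrightarrow> (\<lambda>\<tau>. g (s,\<tau>)) differentiable (at t)"
    and gxy: "\<And>s t. (s,t) \<in> U \<Longrightarrow> (\<lambda>\<tau>. ds g (s,\<tau>)) differentiable (at t)"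
    and gyx: "\<And>s t. (s,t) \<in> U \<Longrightarrow> (\<lambda>\<sigma>. dt g (\<sigma>,t)) differentiable (at s)"
    and c1: "continuous_on U (dt (ds g))"
    and c2: "continuous_on U (ds (dt g))"
  shows "dt (ds g) z = ds (dt g) z"
proof (rule ccontr)
  assume ne: "dt (ds g) z \<noteq> ds (dt g) z"
  obtain s t where z: "z = (s,t)" by fastforce
  define a where "a = dt (ds g) z"
  define b where "b = ds (dt g) z"
  define \<epsilon> where "\<epsilon> = \<bar>a - b\<bar> / 2"
  have ep: "\<epsilon> > 0" using ne by (simp add: \<epsilon>_def a_def b_def)
  have "isCont (dt (ds g)) z" using c1 U continuous_on_eq_continuous_at by blast
  then obtain d1 where d1: "d1 > 0" "\<And>w. dist w z < d1 \<Longrightarrow> dist (dt (ds g) w) a < \<epsilon>"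
    unfolding continuous_at_eps_delta a_def using ep by blast
  have "isCont (ds (dt g)) z" using c2 U continuous_on_eq_continuous_at by blast
  then obtain d2 where d2: "d2 > 0" "\<And>w. dist w z < d2 \<Longrightarrow> dist (ds (dt g) w) b < \<epsilon>"
    unfolding continuous_at_eps_delta b_def using ep by blast
  obtain d3 where d3: "d3 > 0" "ball z d3 \<subseteq> U" using U open_contains_ball by blast
  define \<delta> where "\<delta> = min d1 (min d2 d3)"
  have dpos: "\<delta> > 0" using d1 d2 d3 by (simp add: \<delta>_def)
  define h where "h = \<delta> / 3"
  have hpos: "h > 0" using dpos by (simp add: h_def)
  have rect: "dist (\<sigma>, \<tau>) z < \<delta>" if "s \<le> \<sigma>" "\<sigma> \<le> s + h" "t \<le> \<tau>" "\<tau> \<le> t + h" for \<sigma> \<tau>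
  proof -
    have "dist (\<sigma>, \<tau>) z = sqrt ((\<sigma> - s)\<^sup>2 + (\<tau> - t)\<^sup>2)"
      by (simp add: z dist_Pair_Pair dist_real_def)
    also have "\<dots> \<le> sqrt ((\<sigma> - s + (\<tau> - t))\<^sup>2)"
      by (rule real_sqrt_le_mono) (use that in \<open>simp add: power2_sum\<close>)
    also have "\<dots> = \<sigma> - s + (\<tau> - t)" using that by simp
    also have "\<dots> < \<delta>" using that hpos by (simp add: h_def)
    finally show ?thesis .
  qed
  have inU: "(\<sigma>, \<tau>) \<in> U" if "s \<le> \<sigma>" "\<sigma> \<le> s + h" "t \<le> \<tau>" "\<tau> \<le> t + h" for \<sigma> \<tau>
  proof -
    have "dist z (\<sigma>, \<tau>) < d3" using rect[OF that] by (simp add: \<delta>_def dist_commute)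
    then show ?thesis using d3 by auto
  qed
  define \<Delta> where "\<Delta> = g (s+h, t+h) - g (s+h, t) - g (s, t+h) + g (s, t)"
  obtain \<xi> where \<xi>: "s < \<xi>" "\<xi> < s + h"
    "(g (s+h, t+h) - g (s+h, t)) - (g (s, t+h) - g (s, t)) = ((s+h) - s) * (ds g (\<xi>, t+h) - ds g (\<xi>, t))"
  proof -
    have "\<exists>x. s < x \<and> x < s + h \<and> (g (s+h, t+h) - g (s+h, t)) - (g (s, t+h) - g (s, t)) = ((s+h) - s) * (ds g (x, t+h) - ds g (x, t))"
      using hpos
      by (intro MVT2[where f="\<lambda>\<sigma>. g (\<sigma>, t+h) - g (\<sigma>, t)"])
         (auto intro!: derivative_intros ds_DERIV gx inU)
    then show ?thesis using that by blast
  qed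
  obtain \<eta> where \<eta>: "t < \<eta>" "\<eta> < t + h"
    "ds g (\<xi>, t+h) - ds g (\<xi>, t) = ((t+h) - t) * dt (ds g) (\<xi>, \<eta>)"
  proof -
    have "\<exists>x. t < x \<and> x < t + h \<and> ds g (\<xi>, t+h) - ds g (\<xi>, t) = ((t+h) - t) * dt (ds g) (\<xi>, x)"
      using hpos \<xi>
      by (intro MVT2[where f="\<lambda>\<tau>. ds g (\<xi>, \<tau>)"]) (auto intro!: dt_DERIV gxy inU)
    then show ?thesis using that by blast
  qed
  have D1: "\<Delta> = h * h * dt (ds g) (\<xi>, \<eta>)" using \<xi>(3) \<eta>(3) by (simp add: \<Delta>_def algebra_simps)
  have A1: "dist (dt (ds g) (\<xi>, \<eta>)) a < \<epsilon>"
    using rect[of \<xi> \<eta>] \<xi> \<eta> by (intro d1(2)) (simp add: \<delta>_def)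
  obtain \<eta>' where \<eta>': "t < \<eta>'" "\<eta>' < t + h"
    "(g (s+h, t+h) - g (s, t+h)) - (g (s+h, t) - g (s, t)) = ((t+h) - t) * (dt g (s+h, \<eta>') - dt g (s, \<eta>'))"
  proof -
    have "\<exists>x. t < x \<and> x < t + h \<and> (g (s+h, t+h) - g (s, t+h)) - (g (s+h, t) - g (s, t)) = ((t+h) - t) * (dt g (s+h, x) - dt g (s, x))"
      using hpos
      by (intro MVT2[where f="\<lambda>\<tau>. g (s+h, \<tau>) - g (s, \<tau>)"])
         (auto intro!: derivative_intros dt_DERIV gy inU)
    then show ?thesis using that by blast
  qed
  obtain \<xi>' where \<xi>': "s < \<xi>'" "\<xi>' < s + h"
    "dt g (s+h, \<eta>') - dt g (s, \<eta>') = ((s+h) - s) * ds (dt g) (\<xi>', \<eta>')"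
  proof -
    have "\<exists>x. s < x \<and> x < s + h \<and> dt g (s+h, \<eta>') - dt g (s, \<eta>') = ((s+h) - s) * ds (dt g) (x, \<eta>')"
      using hpos \<eta>'
      by (intro MVT2[where f="\<lambda>\<sigma>. dt g (\<sigma>, \<eta>')"]) (auto intro!: ds_DERIV gyx inU)
    then show ?thesis using that by blast
  qed
  have D2: "\<Delta> = h * h * ds (dt g) (\<xi>', \<eta>')" using \<xi>'(3) \<eta>'(3) by (simp add: \<Delta>_def algebra_simps)
  have A2: "dist (ds (dt g) (\<xi>', \<eta>')) b < \<epsilon>"
    using rect[of \<xi>' \<eta>'] \<xi>' \<eta>' by (intro d2(2)) (simp add: \<delta>_def)
  have "dt (ds g) (\<xi>, \<eta>) = ds (dt g) (\<xi>', \<eta>')" using D1 D2 hpos by simp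
  then have "\<bar>a - b\<bar> < 2 * \<epsilon>" using A1 A2 by (simp add: dist_real_def)
  then show False by (simp add: \<epsilon>_def)
qed

inductive polyf :: "(real^'n \<Rightarrow> real) \<Rightarrow> bool" where
  pconst: "polyf (\<lambda>x. c)"
| pcoord: "polyf (\<lambda>x. x$i)"
| padd: "polyf g \<Longrightarrow> polyf h \<Longrightarrow> polyf (\<lambda>x. g x + h x)"
| pmult: "polyf g \<Longrightarrow> polyf h \<Longrightarrow> polyf (\<lambda>x. g x * h x)"

lemma partial_add:
  fixes g h :: "real^'n \<Rightarrow> real"
  assumes "g differentiable (at y)" "h differentiable (at y)"
  shows "partial i (\<lambda>x. g x + h x) y = partial i g y + partial i h y"
proof -
  obtain G H where G: "(g has_derivative G) (at y)" and H: "(h has_derivative H) (at y)"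
    using assms unfolding differentiable_def by blast
  show ?thesis using partial_hd[OF G] partial_hd[OF H] partial_hd[OF has_derivative_add[OF G H]] by simp
qed

lemma partial_mult:
  fixes g h :: "real^'n \<Rightarrow> real"
  assumes "g differentiable (at y)" "h differentiable (at y)"
  shows "partial i (\<lambda>x. g x * h x) y = g y * partial i h y + partial i g y * h y"
proof -
  obtain G H where G: "(g has_derivative G) (at y)" and H: "(h has_derivative H) (at y)"
    using assms unfolding differentiable_def by blast
  show ?thesis using partial_hd[OF G] partial_hd[OF H] partial_hd[OF has_derivative_mult[OF G H]] by simp
qed

lemma partial_const: "partial i (\<lambda>x::real^'n. c::real) y = 0"
  using partial_hd[OF has_derivative_const[of c "at y"]] by simp

lemma partial_coord: "partial i (\<lambda>x::real^'n. x$j) y = (if j = i then 1 else 0)"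
proof -
  have "((\<lambda>x::real^'n. x$j) has_derivative (\<lambda>x. x$j)) (at y)"
    by (rule bounded_linear_imp_has_derivative) (rule bounded_linear_vec_nth)
  from partial_hd[OF this] show ?thesis by (simp add: axis_def)
qed

lemma polyf_diff:
  fixes g :: "real^'n \<Rightarrow> real"
  assumes "polyf g"
  shows "(\<forall>y. g differentiable (at y)) \<and> (\<forall>i. polyf (\<lambda>y. partial i g y))"
  using assms
proof induction
  case (pconst c)
  then show ?case by (simp add: partial_const polyf.pconst)
next
  case (pcoord j)
  have "\<And>y. (\<lambda>x::real^'n. x$j) differentiable (at y)"
    using bounded_linear_imp_differentiable[OF bounded_linear_vec_nth] by blast
  moreover have "polyf (\<lambda>y::real^'n. partial i (\<lambda>x. x$j) y)" for i
    by (simp add: partial_coord polyf.pconst)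
  ultimately show ?case by blast
next
  case (padd g h)
  then show ?case by (simp add: partial_add polyf.padd)
next
  case (pmult g h)
  have "polyf (\<lambda>y. partial i (\<lambda>x. g x * h x) y)" for i
    using pmult by (simp add: partial_mult polyf.padd polyf.pmult)
  with pmult show ?case by simp
qed

lemma polyf_sum:
  fixes f :: "'a \<Rightarrow> real^'n \<Rightarrow> real"
  assumes "finite S" "\<And>a. a \<in> S \<Longrightarrow> polyf (f a)"
  shows "polyf (\<lambda>x. \<Sum>a\<in>S. f a x)"
  using assms
proof (induction S rule: finite_induct)
  case empty then show ?case using polyf.pconst[of 0] by simp
next
  case (insert a F) then show ?case using polyf.padd[of "f a" "\<lambda>x. \<Sum>a\<in>F. f a x"] by simp
qed

lemma polyf_prod:
  fixes f :: "'a \<Rightarrow> real^'n \<Rightarrow> real"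
  assumes "finite S" "\<And>a. a \<in> S \<Longrightarrow> polyf (f a)"
  shows "polyf (\<lambda>x. \<Prod>a\<in>S. f a x)"
  using assms
proof (induction S rule: finite_induct)
  case empty then show ?case using polyf.pconst[of 1] by simp
next
  case (insert a F) then show ?case using polyf.pmult[of "f a" "\<lambda>x. \<Prod>a\<in>F. f a x"] by simp
qed

lemma polyf_pow:
  fixes g :: "real^'n \<Rightarrow> real"
  assumes "polyf g"
  shows "polyf (\<lambda>x. g x ^ k)"
proof (induction k)
  case 0 then show ?case using polyf.pconst[of 1] by simp
next
  case (Suc k) then show ?case using polyf.pmult[OF assms Suc] by simp
qed

lemma hom_polyf:
  fixes \<phi> :: "real^'n \<Rightarrow> real"
  assumes "homogeneous_polynomial m \<phi>"
  shows "polyf \<phi>"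
proof -
  obtain S c where S: "finite S" "\<forall>x. \<phi> x = (\<Sum>\<alpha>\<in>S. c \<alpha> * (\<Prod>i\<in>UNIV. (x $ i) ^ \<alpha> i))"
    using assms unfolding homogeneous_polynomial_def by blast
  have "polyf (\<lambda>x. \<Sum>\<alpha>\<in>S. c \<alpha> * (\<Prod>i\<in>UNIV. (x $ i) ^ \<alpha> i))"
    by (intro polyf_sum S(1) polyf.pmult polyf.pconst polyf_prod polyf_pow polyf.pcoord) simp
  moreover have "\<phi> = (\<lambda>x. \<Sum>\<alpha>\<in>S. c \<alpha> * (\<Prod>i\<in>UNIV. (x $ i) ^ \<alpha> i))" using S(2) by auto
  ultimately show ?thesis by simp
qed

lemma hom_scale:
  fixes \<phi> :: "real^'n \<Rightarrow> real"
  assumes "homogeneous_polynomial m \<phi>"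
  shows "\<phi> (c *\<^sub>R y) = c ^ m * \<phi> y"
proof -
  obtain S e where S: "finite S" "\<forall>\<alpha>\<in>S. (\<Sum>i\<in>UNIV. \<alpha> i) = m"
     "\<forall>x. \<phi> x = (\<Sum>\<alpha>\<in>S. e \<alpha> * (\<Prod>i\<in>UNIV. (x $ i) ^ \<alpha> i))"
    using assms unfolding homogeneous_polynomial_def by blast
  have "\<phi> (c *\<^sub>R y) = (\<Sum>\<alpha>\<in>S. e \<alpha> * (\<Prod>i\<in>UNIV. (c * y $ i) ^ \<alpha> i))" using S(3) by simp
  also have "\<dots> = (\<Sum>\<alpha>\<in>S. c ^ m * (e \<alpha> * (\<Prod>i\<in>UNIV. (y $ i) ^ \<alpha> i)))"
  proof (rule sum.cong[OF refl])
    fix \<alpha> assume "\<alpha> \<in> S"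
    have "(\<Prod>i\<in>UNIV. c ^ \<alpha> i) = c ^ (\<Sum>i\<in>UNIV. \<alpha> i)" by (simp add: power_sum)
    then have "(\<Prod>i\<in>UNIV. c ^ \<alpha> i) = c ^ m" using S(2) \<open>\<alpha> \<in> S\<close> by simp
    then show "e \<alpha> * (\<Prod>i\<in>UNIV. (c * y $ i) ^ \<alpha> i) = c ^ m * (e \<alpha> * (\<Prod>i\<in>UNIV. (y $ i) ^ \<alpha> i))"
      by (simp add: power_mult_distrib prod.distrib)
  qed
  also have "\<dots> = c ^ m * \<phi> y" using S(3) by (simp add: sum_distrib_left)
  finally show ?thesis .
qed

lemma euler:
  fixes \<phi> :: "real^'n \<Rightarrow> real"
  assumes "homogeneous_polynomial m \<phi>"
  shows "(\<Sum>i\<in>UNIV. y$i * partial i \<phi> y) = real m * \<phi> y"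
proof -
  have d: "\<phi> differentiable (at x)" for x using polyf_diff[OF hom_polyf[OF assms]] by blast
  have G: "(\<phi> has_derivative (\<lambda>v. \<Sum>i\<in>UNIV. v$i * partial i \<phi> (1 *\<^sub>R y))) (at (1 *\<^sub>R y))"
    by (rule Dn[OF d])
  have L: "((\<lambda>c::real. c *\<^sub>R y) has_derivative (\<lambda>c. c *\<^sub>R y)) (at 1)"
    by (auto intro!: derivative_eq_intros)
  have "((\<lambda>c. \<phi> (c *\<^sub>R y)) has_derivative (\<lambda>c. \<Sum>i\<in>UNIV. (c *\<^sub>R y)$i * partial i \<phi> (1 *\<^sub>R y))) (at 1)"
    using has_derivative_compose[OF L G] by (simp add: o_def)
  moreover have "(\<lambda>c. \<Sum>i\<in>UNIV. (c *\<^sub>R y)$i * partial i \<phi> (1 *\<^sub>R y)) = (*) (\<Sum>i\<in>UNIV. y$i * partial i \<phi> y)"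
    by (auto simp: sum_distrib_right fun_eq_iff intro!: sum.cong)
  ultimately have D1: "((\<lambda>c. \<phi> (c *\<^sub>R y)) has_real_derivative (\<Sum>i\<in>UNIV. y$i * partial i \<phi> y)) (at 1)"
    by (simp add: has_field_derivative_def)
  have D2: "((\<lambda>c. c ^ m * \<phi> y) has_real_derivative (real m * \<phi> y)) (at 1)"
    by (auto intro!: derivative_eq_intros)
  have "(\<lambda>c. \<phi> (c *\<^sub>R y)) = (\<lambda>c. c ^ m * \<phi> y)" using hom_scale[OF assms] by auto
  with D1 D2 show ?thesis using DERIV_unique by metis
qed

lemma norm_partial:
  fixes y :: "real^'n"
  assumes "y \<noteq> 0"
  shows "norm differentiable (at y)" and "partial i norm y = y$i / norm y"
proof -
  have h: "(norm has_derivative (\<lambda>h. h \<bullet> sgn y)) (at y)"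
    using has_derivative_norm[OF assms] by simp
  then show "norm differentiable (at y)" unfolding differentiable_def by blast
  show "partial i norm y = y$i / norm y"
    using partial_hd[OF h, of i] by (simp add: sgn_div_norm inner_axis' divide_inverse mult.commute)
qed

lemma radial:
  fixes y :: "real^'n"
  assumes "y \<noteq> 0" and F: "(F has_real_derivative F') (at (norm y))"
  shows "(\<lambda>y. F (norm y)) differentiable (at y)"
    and "partial i (\<lambda>y. F (norm y)) y = F' * (y$i / norm y)"
proof -
  have G: "(norm has_derivative (\<lambda>v. \<Sum>j\<in>UNIV. v$j * partial j norm y)) (at y)"
    by (rule Dn[OF norm_partial(1)[OF assms(1)]])
  have H: "((\<lambda>y. F (norm y)) has_derivative (\<lambda>v. (\<Sum>j\<in>UNIV. v$j * partial j norm y) * F')) (at y)"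
    by (rule DERIV_compose_FDERIV[OF F G])
  then show "(\<lambda>y. F (norm y)) differentiable (at y)" unfolding differentiable_def by blast
  have ax: "(\<Sum>j\<in>UNIV. axis i (1::real) $ j * F j) = F i" for F :: "'n \<Rightarrow> real"
  proof -
    have "\<And>j. axis i (1::real) $ j * F j = (if j = i then F j else 0)" by (simp add: axis_def)
    then show ?thesis by simp
  qed
  show "partial i (\<lambda>y. F (norm y)) y = F' * (y$i / norm y)"
    unfolding partial_hd[OF H, of i] norm_partial(2)[OF assms(1)] ax[of "\<lambda>j. y$j / norm y"]
    by simp
qed

lemma pow_deriv:
  fixes r :: real
  assumes "r > 0"
  shows "((\<lambda>r. r ^ m) has_real_derivative (real m * r ^ m / r)) (at r)"
proof -
  have "((\<lambda>r. r ^ m) has_real_derivative (real m * r ^ (m - Suc 0))) (at r)"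
    using DERIV_pow[of m r UNIV] by simp
  moreover have "real m * r ^ (m - Suc 0) = real m * r ^ m / r"
  proof (cases m)
    case 0 then show ?thesis by simp
  next
    case (Suc k) then show ?thesis using assms by simp
  qed
  ultimately show ?thesis by simp
qed

lemma W_deriv:
  fixes r :: real
  assumes "r > 0"
  shows "((\<lambda>r. c * (real m * r ^ m / r\<^sup>2)) has_real_derivative
          (c * (real m * (real m - 2) * r ^ m / r ^ 3))) (at r)"
proof -
  have P: "((\<lambda>r. r ^ m) has_real_derivative (real m * r ^ m / r)) (at r)" by (rule pow_deriv[OF assms])
  have Q: "((\<lambda>r. r\<^sup>2) has_real_derivative (2 * r)) (at r)" using DERIV_pow[of 2 r UNIV] by simp
  have "((\<lambda>r. r ^ m / r\<^sup>2) has_real_derivative ((real m * r ^ m / r) * r\<^sup>2 - r ^ m * (2 * r)) / (r\<^sup>2 * r\<^sup>2)) (at r)"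
    by (rule DERIV_divide[OF P Q]) (use assms in simp)
  then have "((\<lambda>r. (c * real m) * (r ^ m / r\<^sup>2)) has_real_derivative (c * real m) * (((real m * r ^ m / r) * r\<^sup>2 - r ^ m * (2 * r)) / (r\<^sup>2 * r\<^sup>2))) (at r)"
    by (rule DERIV_cmult)
  moreover have "(\<lambda>r. (c * real m) * (r ^ m / r\<^sup>2)) = (\<lambda>r. c * (real m * r ^ m / r\<^sup>2))" by (simp add: fun_eq_iff)
  moreover have "(c * real m) * (((real m * r ^ m / r) * r\<^sup>2 - r ^ m * (2 * r)) / (r\<^sup>2 * r\<^sup>2))
      = c * (real m * (real m - 2) * r ^ m / r ^ 3)"
    using assms by (simp add: field_simps power2_eq_square power3_eq_cube)
  ultimately show ?thesis by simp
qed

lemma Afun_diff: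
  fixes f :: "real \<times> real \<Rightarrow> real"
  assumes "ds f differentiable (at z)" "dt f differentiable (at z)"
  shows "Afun f differentiable (at z)"
proof -
  obtain D1 D2 where D1: "(ds f has_derivative D1) (at z)" and D2: "(dt f has_derivative D2) (at z)"
    using assms unfolding differentiable_def by blast
  have e: "Afun f = (\<lambda>w. ((ds f w)\<^sup>2 + (dt f w)\<^sup>2) * fst w + 2 * ds f w * dt f w * snd w)"
    by (auto simp: Afun_def fun_eq_iff)
  have F: "fst differentiable (at z)" and S: "snd differentiable (at z)"
    using bounded_linear_imp_differentiable[OF bounded_linear_fst]
      bounded_linear_imp_differentiable[OF bounded_linear_snd] by blast+
  have "(\<lambda>w. ((ds f w)\<^sup>2 + (dt f w)\<^sup>2) * fst w + 2 * ds f w * dt f w * snd w) differentiable (at z)"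
    by (intro derivative_intros assms F S)
  then show ?thesis unfolding e .
qed

lemma sum_lin:
  fixes a b c d :: "'i \<Rightarrow> real"
  shows "(\<Sum>i\<in>S. K1 * a i + K2 * b i + K3 * c i + K4 * d i + K5)
       = K1 * sum a S + K2 * sum b S + K3 * sum c S + K4 * sum d S + real (card S) * K5"
  by (simp add: sum.distrib sum_distrib_left)

lemma norm_sq_sum: "(norm (v::real^'n))\<^sup>2 = (\<Sum>i\<in>UNIV. v$i * v$i)"
  by (simp add: power2_norm_eq_inner inner_vec_def)

lemma pow_2m2:
  fixes r :: real
  assumes "m > 0" "r \<noteq> 0"
  shows "r ^ (2 * m - 2) = (r ^ m)\<^sup>2 / r\<^sup>2"
proof -
  have "r ^ (2 * m - 2) * r\<^sup>2 = r ^ (2 * m - 2 + 2)" by (simp only: power_add)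
  also have "2 * m - 2 + 2 = 2 * m" using assms by simp
  finally have "r ^ (2 * m - 2) * r\<^sup>2 = (r ^ m)\<^sup>2" by (simp add: power_mult mult.commute)
  then show ?thesis using assms by (simp add: field_simps)
qed

lemma powi_m2:
  fixes r :: real
  assumes "r \<noteq> 0"
  shows "r powi (int m - 2) = r ^ m / r\<^sup>2"
  using assms by (simp add: power_int_diff power_int_of_nat)

lemma powr_m4:
  fixes r :: real
  assumes "r > 0" "m > 0"
  shows "(r ^ m) powr (1 - 4 / real m) = r ^ m / r ^ 4"
proof -
  have s: "r ^ m > 0" using assms by simp
  have "(r ^ m) powr (1 - 4 / real m) = (r ^ m) powr 1 / (r ^ m) powr (4 / real m)"
    by (rule powr_diff)
  also have "(r ^ m) powr (4 / real m) = (r powr real m) powr (4 / real m)"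
    using assms by (simp add: powr_realpow)
  also have "\<dots> = r powr 4" using assms by (simp add: powr_powr)
  also have "\<dots> = r ^ 4" using assms powr_realpow[of r 4] by simp
  finally show ?thesis using s by simp
qed

lemma final_alg2:
  fixes r M s t fs ft fss fts fst ftt As At p mu nu n Wv Wv' :: real
  assumes r: "r > 0" and M: "M > 0" and sy: "fts = fst" and W: "Wv = M* s/r^2"
    and W': "Wv' = M*(M-2)* s/r^3" and n: "n = mu*M + 2"
  shows "(M * (Wv * ((fs^2+ft^2)* s + 2*fs*ft*t))) *
      ((fss*Wv*Wv + fs*Wv'/r) * r^2 + (fts*Wv + fst*Wv) * (M*t) + ftt * (M^2 * (s^2/r^2))
        + ft * (nu * M^2 * (s/r^2)) + n * (fs*Wv))
    + (p-2)/2 * ((fs*Wv*M*(Wv*As*Wv + Wv'*((fs^2+ft^2)* s + 2*fs*ft*t)/r)) * r^2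
        + (fs*Wv*M*Wv*At + ft*M*(Wv*As*Wv + Wv'*((fs^2+ft^2)* s + 2*fs*ft*t)/r)) * (M*t)
        + (ft*M*Wv*At) * (M^2*(s^2/r^2)))
  = M^4 * (s / r^4) * (s * ((fs^2+ft^2)* s + 2*fs*ft*t) * ((fss+ftt)* s + 2*fst*t + (mu+1)*fs + nu*ft)
       + (p-2)/2 * s * ((fs*As + ft*At)* s + (fs*At + ft*As)*t)
       + (M-2)*(p-2)/(2*M) * ((fs^2+ft^2)* s + 2*fs*ft*t) * (fs* s + ft*t))"
  unfolding sy W W' n using r M by (simp add: field_simps power2_eq_square) (simp add: algebra_simps power_def)

theorem proposition3p1:
  fixes \<phi> :: "real^'n \<Rightarrow> real"
    and m m1 m2 :: nat
    and p :: real
    and f :: "real \<times> real \<Rightarrow> real"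
    and U :: "(real \<times> real) set"
  assumes "m > 0" and "m1 > 0" and "m1 \<le> m2"
    and dim: "real CARD('n) = (real m1 + real m2) / 2 * real m + 2"
    and hom: "homogeneous_polynomial m \<phi>"
    and eik: "\<And>x. (norm (grad \<phi> x))\<^sup>2 = (real m)\<^sup>2 * norm x ^ (2 * m - 2)"
    and lap: "\<And>x. laplacian \<phi> x
                 = (real m2 - real m1) / 2 * (real m)\<^sup>2 * norm x powi (int m - 2)"
    and C2: "C2_on U f"
  shows "\<forall>x. x \<noteq> 0 \<and> (norm x ^ m, \<phi> x) \<in> U \<longrightarrow>
           (let s = norm x ^ m; t = \<phi> x; z = (s, t);
                \<mu> = (real m1 + real m2) / 2; \<nu> = (real m2 - real m1) / 2;
                E = s * Afun f z * Cfun \<mu> \<nu> f z + (p - 2) / 2 * s * Bfn f z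
                    + (real m - 2) * (p - 2) / (2 * real m) * Afun f z * hfun f z
            in p_laplacian p (\<lambda>y. f (norm y ^ m, \<phi> y)) x
                 = (real m) ^ 4 * s powr (1 - 4 / real m) * E
               \<and> (p_laplacian p (\<lambda>y. f (norm y ^ m, \<phi> y)) x = 0 \<longleftrightarrow> E = 0))"
proof (intro allI impI)
  fix x :: "real^'n"
  assume xa: "x \<noteq> 0 \<and> (norm x ^ m, \<phi> x) \<in> U"
  have x0: "x \<noteq> 0" and xU: "(norm x ^ m, \<phi> x) \<in> U" using xa by auto
  have m0: "m > 0" by fact
  have oU: "open U" using C2 unfolding C2_on_def by blast
  have gd: "(\<lambda>\<sigma>. g (\<sigma>,t)) differentiable (at s) \<and> (\<lambda>\<tau>. g (s,\<tau>)) differentiable (at t)"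
    if "g \<in> {f, ds f, dt f}" "(s,t) \<in> U" for g s t
    using C2 that unfolding C2_on_def by fast
  have gc: "continuous_on U g"
    if "g \<in> {f, ds f, dt f, ds (ds f), ds (dt f), dt (ds f), dt (dt f)}" for g
    using C2 that unfolding C2_on_def by blast
  have Fd: "g differentiable (at w)" if "g \<in> {f, ds f, dt f}" "w \<in> U" for g w
  proof (rule C1_diff[OF oU that(2)])
    show "\<And>s t. (s, t) \<in> U \<Longrightarrow> (\<lambda>\<sigma>. g (\<sigma>, t)) differentiable at s" using gd that(1) by blast
    show "\<And>s t. (s, t) \<in> U \<Longrightarrow> (\<lambda>\<tau>. g (s, \<tau>)) differentiable at t" using gd that(1) by blast
    show "continuous_on U (dt g)" using that(1) by (intro gc) auto
  qed
  have sym: "dt (ds f) w = ds (dt f) w" if "w \<in> U" for w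
  proof (rule schwarz[OF oU that])
    show "\<And>s t. (s, t) \<in> U \<Longrightarrow> (\<lambda>\<sigma>. f (\<sigma>, t)) differentiable at s" using gd by blast
    show "\<And>s t. (s, t) \<in> U \<Longrightarrow> (\<lambda>\<tau>. f (s, \<tau>)) differentiable at t" using gd by blast
    show "\<And>s t. (s, t) \<in> U \<Longrightarrow> (\<lambda>\<tau>. ds f (s, \<tau>)) differentiable at t" using gd by blast
    show "\<And>s t. (s, t) \<in> U \<Longrightarrow> (\<lambda>\<sigma>. dt f (\<sigma>, t)) differentiable at s" using gd by blast
    show "continuous_on U (dt (ds f))" by (intro gc) auto
    show "continuous_on U (ds (dt f))" by (intro gc) auto
  qed
  have pphi: "polyf \<phi>" by (rule hom_polyf[OF hom])
  have phid: "\<phi> differentiable (at y)" for y using polyf_diff[OF pphi] by blast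
  have Pd: "(\<lambda>y. partial i \<phi> y) differentiable (at y)" for i y
  proof -
    have "polyf (\<lambda>y. partial i \<phi> y)" using polyf_diff[OF pphi] by blast
    then show ?thesis using polyf_diff by blast
  qed
  have eul: "(\<Sum>i\<in>UNIV. y$i * partial i \<phi> y) = real m * \<phi> y" for y by (rule euler[OF hom])
  define W where "W = (\<lambda>r::real. real m * r ^ m / r\<^sup>2)"
  define W' where "W' = (\<lambda>r::real. real m * (real m - 2) * r ^ m / r ^ 3)"
  define N where "N = - {0} \<inter> (\<lambda>y. (norm y ^ m, \<phi> y)) -` U"
  have oN: "open N"
  proof -
    have pc: "isCont \<phi> y" for y using phid differentiable_imp_continuous_within by blast
    have "\<forall>y. isCont (\<lambda>y. (norm y ^ m, \<phi> y)) y"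
      using pc by (auto intro!: continuous_intros)
    then have "open ((\<lambda>y. (norm y ^ m, \<phi> y)) -` U)" using oU continuous_open_vimage by blast
    then show ?thesis unfolding N_def by (intro open_Int) auto
  qed
  have xN: "x \<in> N" using x0 xU by (simp add: N_def)
  have yN: "y \<noteq> 0" "(norm y ^ m, \<phi> y) \<in> U" if "y \<in> N" for y using that by (auto simp: N_def)
  have Sp: "(\<lambda>y. norm y ^ m) differentiable (at y)" "partial i (\<lambda>y. norm y ^ m) y = W (norm y) * y$i"
    if "y \<noteq> 0" for y :: "real^'n" and i
  proof -
    have r: "norm y > 0" using that by simp
    note R = radial[OF that pow_deriv[OF r, of m]]
    show "(\<lambda>y. norm y ^ m) differentiable (at y)" by (rule R(1))
    show "partial i (\<lambda>y. norm y ^ m) y = W (norm y) * y$i"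
      unfolding R(2) W_def using r by (simp add: field_simps power2_eq_square)
  qed
  have Wp: "(\<lambda>y. W (norm y)) differentiable (at y)" "partial i (\<lambda>y. W (norm y)) y = W' (norm y) * (y$i / norm y)"
    if "y \<noteq> 0" for y :: "real^'n" and i
  proof -
    have r: "norm y > 0" using that by simp
    have D: "(W has_real_derivative W' (norm y)) (at (norm y))"
      using W_deriv[OF r, of 1 m] unfolding W_def W'_def by simp
    note R = radial[OF that D]
    show "(\<lambda>y. W (norm y)) differentiable (at y)" by (rule R(1))
    show "partial i (\<lambda>y. W (norm y)) y = W' (norm y) * (y$i / norm y)" by (rule R(2))
  qed
  define u where "u = (\<lambda>y. f (norm y ^ m, \<phi> y))"
  define Z where "Z = (\<lambda>y::real^'n. (norm y ^ m, \<phi> y))"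
  have up: "partial i u y = ds f (Z y) * (W (norm y) * y$i) + dt f (Z y) * partial i \<phi> y"
    if "y \<in> N" for y i
    using chain2(2)[where g=f and S="\<lambda>y. norm y ^ m" and P=\<phi> and y=y and i=i] Fd[of f] yN[OF that] Sp[OF yN(1)[OF that]] phid
    unfolding u_def Z_def by simp
  define r where "r = norm x"
  define s where "s = norm x ^ m"
  define t where "t = \<phi> x"
  have r0: "r > 0" using x0 by (simp add: r_def)
  have zx: "Z x = (s, t)" by (simp add: Z_def s_def t_def)
  have sr: "s = r ^ m" by (simp add: s_def r_def)
  have sU: "(s, t) \<in> U" using xU by (simp add: s_def t_def)
  have dco: "(\<lambda>y::real^'n. y$i) differentiable (at y)" for i y
    using bounded_linear_imp_differentiable[OF bounded_linear_vec_nth] by blast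
  have dG: "(\<lambda>y. g (Z y)) differentiable (at y)"
    if "g \<in> {f, ds f, dt f}" "y \<in> N" for g y
    using chain2(1)[where g=g and S="\<lambda>y. norm y ^ m" and P=\<phi> and y=y] Fd[OF that(1) yN(2)[OF that(2)]]
      Sp(1)[OF yN(1)[OF that(2)]] phid unfolding Z_def by simp
  have pG: "partial i (\<lambda>y. g (Z y)) y = ds g (Z y) * (W (norm y) * y$i) + dt g (Z y) * partial i \<phi> y"
    if "g \<in> {f, ds f, dt f}" "y \<in> N" for g y i
    using chain2(2)[where g=g and S="\<lambda>y. norm y ^ m" and P=\<phi> and y=y and i=i]
      Fd[OF that(1) yN(2)[OF that(2)]] Sp[OF yN(1)[OF that(2)]] phid unfolding Z_def by simp
  have dWc: "(\<lambda>y. W (norm y) * y$i) differentiable (at x)" for i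
    using Wp(1)[OF x0] dco by (rule differentiable_mult)
  have pWc: "partial i (\<lambda>y. W (norm y) * y$i) x = W r + W' r * (x$i / r) * x$i" for i
    using partial_mult[OF Wp(1)[OF x0] dco, of i] Wp(2)[OF x0, of i] partial_coord[of i i x]
    by (simp add: r_def)
  define fs where "fs = ds f (s,t)"
  define ft where "ft = dt f (s,t)"
  define fss where "fss = ds (ds f) (s,t)"
  define fts where "fts = dt (ds f) (s,t)"
  define fst' where "fst' = ds (dt f) (s,t)"
  define ftt where "ftt = dt (dt f) (s,t)"
  have lapi: "partial i (partial i u) x
     = (fss*W r*W r + fs*W' r/r) * (x$i * x$i) + (fts*W r + fst'*W r) * (x$i * partial i \<phi> x)
       + ftt * (partial i \<phi> x * partial i \<phi> x) + ft * partial i (partial i \<phi>) x + fs * W r" for i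
  proof -
    define Q where "Q = (\<lambda>y. ds f (Z y) * (W (norm y) * y$i) + dt f (Z y) * partial i \<phi> y)"
    have "partial i (partial i u) x = partial i Q x"
      by (rule partial_cong[OF oN xN]) (simp add: up Q_def)
    also have "\<dots> = (ds f (Z x) * partial i (\<lambda>y. W (norm y) * y$i) x
                      + partial i (\<lambda>y. ds f (Z y)) x * (W (norm x) * x$i))
                   + (dt f (Z x) * partial i (\<lambda>y. partial i \<phi> y) x
                      + partial i (\<lambda>y. dt f (Z y)) x * partial i \<phi> x)"
      unfolding Q_def
      using partial_add[OF differentiable_mult[OF dG[of "ds f" x] dWc[of i]] differentiable_mult[OF dG[of "dt f" x] Pd[of i x]], of i]
        partial_mult[OF dG[of "ds f" x] dWc[of i], of i] partial_mult[OF dG[of "dt f" x] Pd[of i x], of i] xN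
      by simp
    also have "\<dots> = (fss*W r*W r + fs*W' r/r) * (x$i * x$i) + (fts*W r + fst'*W r) * (x$i * partial i \<phi> x)
       + ftt * (partial i \<phi> x * partial i \<phi> x) + ft * partial i (partial i \<phi>) x + fs * W r"
    proof -
      have e1: "partial i (\<lambda>y. ds f (Z y)) x = fss * (W r * x$i) + fts * partial i \<phi> x"
        using pG[of "ds f" x i] xN by (simp add: zx r_def fss_def fts_def)
      have e2: "partial i (\<lambda>y. dt f (Z y)) x = fst' * (W r * x$i) + ftt * partial i \<phi> x"
        using pG[of "dt f" x i] xN by (simp add: zx r_def fst'_def ftt_def)
      show ?thesis unfolding e1 e2 pWc zx fs_def[symmetric] ft_def[symmetric] r_def[symmetric]
        using r0 by (simp add: field_simps)
    qed
    finally show ?thesis .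
  qed
  have sumxx: "(\<Sum>i\<in>UNIV. x$i * x$i) = r\<^sup>2" using norm_sq_sum[of x] by (simp add: r_def)
  have sumxP: "(\<Sum>i\<in>UNIV. x$i * partial i \<phi> x) = real m * t" using eul[of x] by (simp add: t_def)
  have sumPP: "(\<Sum>i\<in>UNIV. partial i \<phi> x * partial i \<phi> x) = (real m)\<^sup>2 * (s\<^sup>2 / r\<^sup>2)"
  proof -
    have "(\<Sum>i\<in>UNIV. partial i \<phi> x * partial i \<phi> x) = (norm (grad \<phi> x))\<^sup>2"
      using norm_sq_sum[of "grad \<phi> x"] by (simp add: grad_def)
    also have "\<dots> = (real m)\<^sup>2 * (s\<^sup>2 / r\<^sup>2)"
      using eik[of x] pow_2m2[OF m0, of r] r0 by (simp add: r_def[symmetric] sr)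
    finally show ?thesis .
  qed
  have sumq: "(\<Sum>i\<in>UNIV. partial i (partial i \<phi>) x) = (real m2 - real m1) / 2 * (real m)\<^sup>2 * (s / r\<^sup>2)"
    using lap[of x] powi_m2[of r m] r0 unfolding laplacian_def by (simp add: r_def[symmetric] sr)
  have lapu: "laplacian u x = (fss*W r*W r + fs*W' r/r) * r\<^sup>2 + (fts*W r + fst'*W r) * (real m * t)
      + ftt * ((real m)\<^sup>2 * (s\<^sup>2 / r\<^sup>2)) + ft * ((real m2 - real m1) / 2 * (real m)\<^sup>2 * (s / r\<^sup>2))
      + real CARD('n) * (fs * W r)"
  proof -
    have "laplacian u x = (\<Sum>i\<in>UNIV. partial i (partial i u) x)" by (simp add: laplacian_def)
    also have "\<dots> = (\<Sum>i\<in>UNIV. (fss*W r*W r + fs*W' r/r) * (x$i * x$i) + (fts*W r + fst'*W r) * (x$i * partial i \<phi> x)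
       + ftt * (partial i \<phi> x * partial i \<phi> x) + ft * partial i (partial i \<phi>) x + fs * W r)"
      by (rule sum.cong[OF refl]) (rule lapi)
    also note sum_lin
    finally show ?thesis unfolding sumxx sumxP sumPP sumq by simp
  qed
  have Vn: "(norm (grad u y))\<^sup>2 = real m * (W (norm y) * Afun f (Z y))" if yN': "y \<in> N" for y
  proof -
    define a where "a = ds f (Z y)"
    define b where "b = dt f (Z y)"
    define ry where "ry = norm y"
    have ry0: "ry > 0" using yN(1)[OF yN'] by (simp add: ry_def)
    have "(norm (grad u y))\<^sup>2 = (\<Sum>i\<in>UNIV. partial i u y * partial i u y)"
      using norm_sq_sum[of "grad u y"] by (simp add: grad_def)
    also have "\<dots> = (\<Sum>i\<in>UNIV. (a * W ry)\<^sup>2 * (y$i * y$i) + (2 * a * b * W ry) * (y$i * partial i \<phi> y)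
         + b\<^sup>2 * (partial i \<phi> y * partial i \<phi> y) + 0 * 0 + 0)"
      by (rule sum.cong[OF refl]) (simp add: up[OF yN'] a_def b_def ry_def power2_eq_square algebra_simps)
    also note sum_lin
    also have "(\<Sum>i\<in>UNIV. y$i * y$i) = ry\<^sup>2" using norm_sq_sum[of y] by (simp add: ry_def)
    also have "(\<Sum>i\<in>UNIV. y$i * partial i \<phi> y) = real m * \<phi> y" by (rule eul)
    also have "(\<Sum>i\<in>UNIV. partial i \<phi> y * partial i \<phi> y) = (real m)\<^sup>2 * ((ry ^ m)\<^sup>2 / ry\<^sup>2)"
    proof -
      have "(\<Sum>i\<in>UNIV. partial i \<phi> y * partial i \<phi> y) = (norm (grad \<phi> y))\<^sup>2"
        using norm_sq_sum[of "grad \<phi> y"] by (simp add: grad_def)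
      also have "\<dots> = (real m)\<^sup>2 * ((ry ^ m)\<^sup>2 / ry\<^sup>2)"
        using eik[of y] pow_2m2[OF m0, of ry] ry0 by (simp add: ry_def[symmetric])
      finally show ?thesis .
    qed
    also have "(a * W ry)\<^sup>2 * ry\<^sup>2 + 2 * a * b * W ry * (real m * \<phi> y)
        + b\<^sup>2 * ((real m)\<^sup>2 * ((ry ^ m)\<^sup>2 / ry\<^sup>2)) + 0 * (\<Sum>i\<in>UNIV. 0) + real (card (UNIV::'n set)) * 0
        = real m * (W ry * Afun f (Z y))"
      using ry0 by (simp add: W_def Afun_def Z_def a_def b_def ry_def[symmetric] field_simps power2_eq_square)
    finally show ?thesis by (simp add: ry_def)
  qed
  define A0 where "A0 = Afun f (s,t)"
  define As where "As = ds (Afun f) (s,t)"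
  define At where "At = dt (Afun f) (s,t)"
  have A0e: "A0 = (fs\<^sup>2 + ft\<^sup>2) * s + 2 * fs * ft * t" by (simp add: A0_def Afun_def fs_def ft_def)
  have dAf: "Afun f differentiable (at (Z x))"
    using Afun_diff[OF Fd[of "ds f" "Z x"] Fd[of "dt f" "Z x"]] xU by (simp add: Z_def)
  have dAZ: "(\<lambda>y. Afun f (Z y)) differentiable (at x)"
    using chain2(1)[where g="Afun f" and S="\<lambda>y. norm y ^ m" and P=\<phi> and y=x] dAf Sp(1)[OF x0] phid
    unfolding Z_def by simp
  have pAZ: "partial i (\<lambda>y. Afun f (Z y)) x = As * (W r * x$i) + At * partial i \<phi> x" for i
    using chain2(2)[where g="Afun f" and S="\<lambda>y. norm y ^ m" and P=\<phi> and y=x and i=i] dAf Sp[OF x0] phid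
    unfolding Z_def by (simp add: As_def At_def s_def t_def r_def)
  define M where "M = (\<lambda>y. real m * (W (norm y) * Afun f (Z y)))"
  have pM: "partial i M x = real m * (W r * (As * (W r * x$i) + At * partial i \<phi> x) + W' r * (x$i / r) * A0)" for i
  proof -
    have d1: "(\<lambda>y. W (norm y) * Afun f (Z y)) differentiable (at x)"
      using Wp(1)[OF x0] dAZ by (rule differentiable_mult)
    have "partial i M x = real m * partial i (\<lambda>y. W (norm y) * Afun f (Z y)) x"
      using partial_mult[OF differentiable_const[of "real m" "at x"] d1, of i] partial_const[of i "real m" x]
      unfolding M_def by simp
    also have "partial i (\<lambda>y. W (norm y) * Afun f (Z y)) x = W r * (As * (W r * x$i) + At * partial i \<phi> x) + W' r * (x$i / r) * A0"
      using partial_mult[OF Wp(1)[OF x0] dAZ, of i] Wp(2)[OF x0, of i] pAZ[of i] zx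
      by (simp add: r_def A0_def)
    finally show ?thesis .
  qed
  have pV: "partial i (\<lambda>y. (norm (grad u y))\<^sup>2) x = partial i M x" for i
    by (rule partial_cong[OF oN xN]) (simp add: Vn M_def)
  have pux: "partial i u x = fs * (W r * x$i) + ft * partial i \<phi> x" for i
    using up[OF xN, of i] zx by (simp add: fs_def ft_def r_def)
  have gdot: "grad u x \<bullet> grad (\<lambda>y. (norm (grad u y))\<^sup>2) x
     = (fs*W r*real m*(W r*As*W r + W' r*A0/r)) * r\<^sup>2
        + (fs*W r*real m*W r*At + ft*real m*(W r*As*W r + W' r*A0/r)) * (real m*t)
        + (ft*real m*W r*At) * ((real m)\<^sup>2*(s\<^sup>2/r\<^sup>2))"
  proof -
    have "grad u x \<bullet> grad (\<lambda>y. (norm (grad u y))\<^sup>2) x = (\<Sum>i\<in>UNIV. partial i u x * partial i M x)"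
    proof -
      have gn: "grad g y $ i = partial i g y" for g :: "real^'n \<Rightarrow> real" and y i by (simp add: grad_def)
      show ?thesis by (simp only: inner_vec_def gn pV inner_real_def)
    qed
    also have "\<dots> = (\<Sum>i\<in>UNIV. (fs*W r*real m*(W r*As*W r + W' r*A0/r)) * (x$i * x$i)
        + (fs*W r*real m*W r*At + ft*real m*(W r*As*W r + W' r*A0/r)) * (x$i * partial i \<phi> x)
        + (ft*real m*W r*At) * (partial i \<phi> x * partial i \<phi> x) + 0 * 0 + 0)"
      by (rule sum.cong[OF refl]) (use r0 in \<open>simp add: pux pM field_simps\<close>)
    also note sum_lin
    finally show ?thesis unfolding sumxx sumxP sumPP by simp
  qed
  have ngx: "(norm (grad u x))\<^sup>2 = real m * (W r * A0)"
    using Vn[OF xN] zx by (simp add: r_def A0_def)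
  have PL: "p_laplacian p u x = (real m * (W r * A0)) *
      ((fss*W r*W r + fs*W' r/r) * r\<^sup>2 + (fts*W r + fst'*W r) * (real m * t)
      + ftt * ((real m)\<^sup>2 * (s\<^sup>2 / r\<^sup>2)) + ft * ((real m2 - real m1) / 2 * (real m)\<^sup>2 * (s / r\<^sup>2))
      + real CARD('n) * (fs * W r))
    + (p - 2) / 2 * ((fs*W r*real m*(W r*As*W r + W' r*A0/r)) * r\<^sup>2
        + (fs*W r*real m*W r*At + ft*real m*(W r*As*W r + W' r*A0/r)) * (real m*t)
        + (ft*real m*W r*At) * ((real m)\<^sup>2*(s\<^sup>2/r\<^sup>2)))"
    unfolding p_laplacian_def ngx lapu gdot ..
  define E where "E = s * Afun f (s,t) * Cfun ((real m1 + real m2) / 2) ((real m2 - real m1) / 2) f (s,t)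
     + (p - 2) / 2 * s * Bfn f (s,t) + (real m - 2) * (p - 2) / (2 * real m) * Afun f (s,t) * hfun f (s,t)"
  have fsym: "fts = fst'" using sym[OF sU] by (simp add: fts_def fst'_def)
  have key: "p_laplacian p u x = (real m) ^ 4 * (s / r ^ 4) * E"
  proof -
    have "p_laplacian p u x = (real m) ^ 4 * (s / r ^ 4) * (s * ((fs\<^sup>2+ft\<^sup>2)* s + 2*fs*ft*t) * ((fss+ftt)* s + 2*fst'*t + ((real m1 + real m2) / 2+1)*fs + (real m2 - real m1) / 2*ft)
       + (p-2)/2 * s * ((fs*As + ft*At)* s + (fs*At + ft*As)*t)
       + (real m-2)*(p-2)/(2*real m) * ((fs\<^sup>2+ft\<^sup>2)* s + 2*fs*ft*t) * (fs* s + ft*t))"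
      unfolding PL A0e
      by (rule final_alg2[OF r0 _ fsym]) (use m0 dim in \<open>simp_all add: W_def W'_def sr\<close>)
    also have "\<dots> = (real m) ^ 4 * (s / r ^ 4) * E"
      by (simp add: E_def Afun_def Cfun_def Bfn_def hfun_def fs_def ft_def fss_def ftt_def fst'_def As_def At_def)
    finally show ?thesis .
  qed
  have spos: "s / r ^ 4 > 0" using r0 by (simp add: sr)
  have pw: "s powr (1 - 4 / real m) = s / r ^ 4" using powr_m4[OF r0 m0] by (simp add: sr)
  have uu: "(\<lambda>y. f (norm y ^ m, \<phi> y)) = u" by (simp add: u_def)
  show "let s = norm x ^ m; t = \<phi> x; z = (s, t);
                \<mu> = (real m1 + real m2) / 2; \<nu> = (real m2 - real m1) / 2;
                E = s * Afun f z * Cfun \<mu> \<nu> f z + (p - 2) / 2 * s * Bfn f z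
                    + (real m - 2) * (p - 2) / (2 * real m) * Afun f z * hfun f z
            in p_laplacian p (\<lambda>y. f (norm y ^ m, \<phi> y)) x
                 = (real m) ^ 4 * s powr (1 - 4 / real m) * E
               \<and> (p_laplacian p (\<lambda>y. f (norm y ^ m, \<phi> y)) x = 0 \<longleftrightarrow> E = 0)"
    unfolding Let_def uu s_def[symmetric] t_def[symmetric] E_def[symmetric] pw
    using key spos m0 r0 by (simp add: sr)
qed

end
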